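(* Let $G=(L\cup R,E)$ be a Tanner graph without parallel edges and with no node of degree less than 2. (i) Suppose $G$ is left-regular with left degree $d_l\ge 2$, and let $\mathcal{S}\subset L$ be a nonempty $(a,b)$ trapping set whose induced subgraph $G(\mathcal{S})$ is connected and contains no cycle. Then $b\ge a(d_l-2)+2$, with equality if $\mathcal{S}$ is elementary. (ii) The set of variable nodes of any shortest cycle (of length equal to the girth $g$) of $G$ is an elementary trapping set. (iii) For every $\mathcal{S}\in\mathcal{T}$, the induced subgraph $G(\mathcal{S})$ contains at least one cycle. (iv) If $G$ is left-regular with left degree at least 2 and $\mathcal{S}\subset L$ is a nonempty absorbing set, then $G(\mathcal{S})$ contains at least one cycle. (v) If $G$ is left-regular with left degree $l\ge 3$ and $\mathcal{S}\subset L$ is a nonempty ZP trapping set, then $G(\mathcal{S})$ contains at least one cycle.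
   Context: A Tanner graph is a bipartite graph $G=(L\cup R,E)$ with variable nodes $L$ and check nodes $R$; it is left-regular with left degree $d_l$ if every variable node has degree $d_l$. For $\mathcal{S}\subset L$, $\Gamma(\mathcal{S})$ is the set of neighbors of $\mathcal{S}$ in $R$, and the induced subgraph $G(\mathcal{S})$ has node set $\mathcal{S}\cup\Gamma(\mathcal{S})$ and all edges of $G$ between $\mathcal{S}$ and $\Gamma(\mathcal{S})$. $\Gamma_{\mathrm{o}}(\mathcal{S})$ and $\Gamma_{\mathrm{e}}(\mathcal{S})$ are the check nodes of $\Gamma(\mathcal{S})$ with odd, respectively even, degree in $G(\mathcal{S})$. $\mathcal{S}$ is an $(a,b)$ trapping set if $|\mathcal{S}|=a$ and $|\Gamma_{\mathrm{o}}(\mathcal{S})|=b$ (any subset of $L$ is a trapping set for some $(a,b)$); it is elementary if every check node of $G(\mathcal{S})$ has degree one or two in $G(\mathcal{S})$. $\mathcal{S}$ is an absorbing set if every node of $\mathcal{S}$ has strictly more neighbors in $\Gamma_{\mathrm{e}}(\mathcal{S})$ than in $\Gamma_{\mathrm{o}}(\mathcal{S})$. For $G$ left-regular with left degree $l$, $\mathcal{S}$ is a ZP (Zyablov–Pinsker) trapping set if every node of $\mathcal{S}$ is adjacent to fewer than $l-\lfloor (l-1)/2\rfloor$ nodes of $\Gamma_{\mathrm{o}}(\mathcal{S})$. $\mathcal{T}$ denotes the set of all trapping sets $\mathcal{S}\subset L$ such that $G(\mathcal{S})$ is connected and every node of $\mathcal{S}$ is adjacent to at least two nodes of $\Gamma_{\mathrm{e}}(\mathcal{S})$.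 *)

theory Defs
  imports Main
begin

text \<open>A Tanner graph: variable nodes L (type 'v), check nodes R (type 'c),
  edges E as a set of pairs (v,c); a set of pairs has no parallel edges.\<close>

definition tanner_graph :: "'v set \<Rightarrow> 'c set \<Rightarrow> ('v \<times> 'c) set \<Rightarrow> bool" where
  "tanner_graph L R E \<longleftrightarrow> finite L \<and> finite R \<and> E \<subseteq> L \<times> R"

definition vdeg :: "('v \<times> 'c) set \<Rightarrow> 'v \<Rightarrow> nat" where
  "vdeg E v = card {c. (v, c) \<in> E}"

definition cdeg :: "('v \<times> 'c) set \<Rightarrow> 'c \<Rightarrow> nat" where
  "cdeg E c = card {v. (v, c) \<in> E}"

definition min_degree_2 :: "'v set \<Rightarrow> 'c set \<Rightarrow> ('v \<times> 'c) set \<Rightarrow> bool" where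
  "min_degree_2 L R E \<longleftrightarrow> (\<forall>v\<in>L. 2 \<le> vdeg E v) \<and> (\<forall>c\<in>R. 2 \<le> cdeg E c)"

definition left_regular :: "'v set \<Rightarrow> ('v \<times> 'c) set \<Rightarrow> nat \<Rightarrow> bool" where
  "left_regular L E d \<longleftrightarrow> (\<forall>v\<in>L. vdeg E v = d)"

definition Nbr :: "('v \<times> 'c) set \<Rightarrow> 'v set \<Rightarrow> 'c set" where
  "Nbr E S = {c. \<exists>v\<in>S. (v, c) \<in> E}"

definition degS :: "('v \<times> 'c) set \<Rightarrow> 'v set \<Rightarrow> 'c \<Rightarrow> nat" where
  "degS E S c = card {v\<in>S. (v, c) \<in> E}"

definition odd_checks :: "('v \<times> 'c) set \<Rightarrow> 'v set \<Rightarrow> 'c set" where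
  "odd_checks E S = {c\<in>Nbr E S. odd (degS E S c)}"

definition even_checks :: "('v \<times> 'c) set \<Rightarrow> 'v set \<Rightarrow> 'c set" where
  "even_checks E S = {c\<in>Nbr E S. even (degS E S c)}"

definition trapping_set :: "'v set \<Rightarrow> ('v \<times> 'c) set \<Rightarrow> 'v set \<Rightarrow> nat \<Rightarrow> nat \<Rightarrow> bool" where
  "trapping_set L E S a b \<longleftrightarrow> S \<subseteq> L \<and> card S = a \<and> card (odd_checks E S) = b"

definition elementary :: "('v \<times> 'c) set \<Rightarrow> 'v set \<Rightarrow> bool" where
  "elementary E S \<longleftrightarrow> (\<forall>c\<in>Nbr E S. degS E S c = 1 \<or> degS E S c = 2)"

definition absorbing_set :: "('v \<times> 'c) set \<Rightarrow> 'v set \<Rightarrow> bool" where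
  "absorbing_set E S \<longleftrightarrow> (\<forall>v\<in>S.
     card {c\<in>odd_checks E S. (v, c) \<in> E} < card {c\<in>even_checks E S. (v, c) \<in> E})"

definition ZP_trapping_set :: "('v \<times> 'c) set \<Rightarrow> nat \<Rightarrow> 'v set \<Rightarrow> bool" where
  "ZP_trapping_set E l S \<longleftrightarrow> (\<forall>v\<in>S.
     card {c\<in>odd_checks E S. (v, c) \<in> E} < l - (l - 1) div 2)"

text \<open>The induced subgraph G(S), as an undirected graph on Inl ` S \<union> Inr ` \<Gamma>(S).
  Its edges are exactly the edges of G incident to S.  The whole graph G is gadj E L.\<close>
definition gverts :: "('v \<times> 'c) set \<Rightarrow> 'v set \<Rightarrow> ('v + 'c) set" where
  "gverts E S = Inl ` S \<union> Inr ` Nbr E S"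

definition gadj :: "('v \<times> 'c) set \<Rightarrow> 'v set \<Rightarrow> ('v + 'c) \<Rightarrow> ('v + 'c) \<Rightarrow> bool" where
  "gadj E S x y \<longleftrightarrow> (\<exists>v c. v \<in> S \<and> (v, c) \<in> E \<and>
      ((x = Inl v \<and> y = Inr c) \<or> (x = Inr c \<and> y = Inl v)))"

definition is_cycle :: "('a \<Rightarrow> 'a \<Rightarrow> bool) \<Rightarrow> 'a list \<Rightarrow> bool" where
  "is_cycle adj xs \<longleftrightarrow> 3 \<le> length xs \<and> distinct xs \<and>
     (\<forall>i < length xs. adj (xs ! i) (xs ! ((i + 1) mod length xs)))"

definition has_cycle :: "('a \<Rightarrow> 'a \<Rightarrow> bool) \<Rightarrow> bool" where
  "has_cycle adj \<longleftrightarrow> (\<exists>xs. is_cycle adj xs)"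

text \<open>Connected graphs are nonempty by convention.\<close>
definition induced_connected :: "('v \<times> 'c) set \<Rightarrow> 'v set \<Rightarrow> bool" where
  "induced_connected E S \<longleftrightarrow> gverts E S \<noteq> {} \<and>
     (\<forall>x\<in>gverts E S. \<forall>y\<in>gverts E S. (gadj E S)\<^sup>*\<^sup>* x y)"

definition class_T :: "'v set \<Rightarrow> ('v \<times> 'c) set \<Rightarrow> 'v set set" where
  "class_T L E = {S. S \<subseteq> L \<and> induced_connected E S \<and>
     (\<forall>v\<in>S. 2 \<le> card {c\<in>even_checks E S. (v, c) \<in> E})}"

end

theory Submission
  imports Defs
begin


lemma is_cycle_mono:
  assumes "is_cycle adj xs" "\<And>x y. adj x y \<Longrightarrow> adj' x y"
  shows "is_cycle adj' xs"
  using assms unfolding is_cycle_def by blast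

lemma is_cycle_rotate:
  assumes "is_cycle adj xs"
  shows "is_cycle adj (rotate k xs)"
proof -
  let ?n = "length xs"
  have n: "3 \<le> ?n" "distinct xs" and a: "\<And>i. i < ?n \<Longrightarrow> adj (xs ! i) (xs ! ((i + 1) mod ?n))"
    using assms unfolding is_cycle_def by auto
  have "adj (rotate k xs ! i) (rotate k xs ! ((i + 1) mod ?n))" if "i < ?n" for i
  proof -
    have "rotate k xs ! i = xs ! ((k + i) mod ?n)" using that nth_rotate by blast
    moreover have "rotate k xs ! ((i + 1) mod ?n) = xs ! ((k + (i+1) mod ?n) mod ?n)"
      using n(1) by (intro nth_rotate) (metis mod_less_divisor not_less_iff_gr_or_eq less_le_trans zero_less_numeral)
    moreover have "(k + (i+1) mod ?n) mod ?n = ((k + i) mod ?n + 1) mod ?n"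
      by (metis add.assoc mod_add_left_eq mod_add_right_eq)
    moreover have "(k + i) mod ?n < ?n" using n(1) by (metis mod_less_divisor not_less_iff_gr_or_eq less_le_trans zero_less_numeral)
    ultimately show ?thesis using a by metis
  qed
  then show ?thesis using n unfolding is_cycle_def by simp
qed

lemma is_cycle_chord:
  assumes "is_cycle adj ys" "2 \<le> e" "e < length ys" "adj (ys ! e) (ys ! 0)"
  shows "is_cycle adj (take (e+1) ys)"
proof -
  let ?n = "length ys"
  have n: "3 \<le> ?n" "distinct ys" and a: "\<And>i. i < ?n \<Longrightarrow> adj (ys ! i) (ys ! ((i + 1) mod ?n))"
    using assms unfolding is_cycle_def by auto
  have "adj (take (e+1) ys ! i) (take (e+1) ys ! ((i + 1) mod (e+1)))" if "i < e+1" for i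
  proof (cases "i < e")
    case True
    then have "(i+1) mod ?n = i + 1" "(i+1) mod (e+1) = i+1" using assms(3) by auto
    then show ?thesis using a[of i] True assms(3) by simp
  next
    case False
    then have "i = e" using that by simp
    then show ?thesis using assms(4) by simp
  qed
  moreover have "length (take (e+1) ys) = e+1" using assms(3) by simp
  moreover have "distinct (take (e+1) ys)" using n(2) by simp
  ultimately show ?thesis using assms(2) unfolding is_cycle_def by (metis add_le_mono1 numeral_3_eq_3 Suc_eq_plus1 numeral_2_eq_2)
qed

lemma is_cycle_detour:
  assumes "is_cycle adj ys" "1 \<le> d" "d < length ys" "z \<notin> set ys"
    "adj (ys ! d) z" "adj z (ys ! 0)"
  shows "is_cycle adj (take (d+1) ys @ [z])"
proof -
  let ?n = "length ys"
  let ?c = "take (d+1) ys @ [z]"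
  have n: "3 \<le> ?n" "distinct ys" and a: "\<And>i. i < ?n \<Longrightarrow> adj (ys ! i) (ys ! ((i + 1) mod ?n))"
    using assms unfolding is_cycle_def by auto
  have len: "length ?c = d + 2" using assms(3) by simp
  have "adj (?c ! i) (?c ! ((i + 1) mod (d+2)))" if "i < d+2" for i
  proof -
    have "i < d \<or> i = d \<or> i = d + 1" using that by linarith
    then consider "i < d" | "i = d" | "i = d + 1" by blast
    then show ?thesis
    proof cases
      case 1
      then have "(i+1) mod ?n = i + 1" "(i+1) mod (d+2) = i+1" using assms(3) by auto
      then show ?thesis using a[of i] 1 assms(3) by (simp add: nth_append)
    next
      case 2
      then show ?thesis using assms(3,5) by (simp add: nth_append)
    next
      case 3
      then show ?thesis using assms(3,6) by (simp add: nth_append)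
    qed
  qed
  moreover have "distinct ?c" using n(2) assms(4)
    by (auto dest: in_set_takeD)
  ultimately show ?thesis using len assms(2) unfolding is_cycle_def by simp
qed



lemma mindeg2_cycle:
  assumes fin: "finite V" and x0: "x0 \<in> V"
    and deg: "\<And>x. x \<in> V \<Longrightarrow> \<exists>y z. y \<noteq> z \<and> adj x y \<and> adj x z \<and> y \<in> V \<and> z \<in> V"
    and irr: "\<And>x. \<not> adj x x"
  shows "has_cycle adj"
proof -
  define P where "P = {xs. xs \<noteq> [] \<and> distinct xs \<and> set xs \<subseteq> V \<and>
      (\<forall>i. Suc i < length xs \<longrightarrow> adj (xs!i) (xs!Suc i))}"
  have sub: "length ` P \<subseteq> {..card V}"
  proof
    fix k assume "k \<in> length ` P"
    then obtain xs where "xs \<in> P" "k = length xs" by auto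
    then have "distinct xs" "set xs \<subseteq> V" unfolding P_def by auto
    then have "length xs \<le> card V" using fin by (metis card_mono distinct_card)
    then show "k \<in> {..card V}" using \<open>k = length xs\<close> by simp
  qed
  have finl: "finite (length ` P)" using sub finite_subset by blast
  have "[x0] \<in> P" using x0 unfolding P_def by simp
  then have ne: "length ` P \<noteq> {}" by blast
  obtain xs where xsP: "xs \<in> P" and xsl: "length xs = Max (length ` P)"
    using Max_in[OF finl ne] by auto
  have maxl: "\<And>ys. ys \<in> P \<Longrightarrow> length ys \<le> length xs"
    using xsl finl by simp
  define n where "n = length xs"
  have xs: "xs \<noteq> []" "distinct xs" "set xs \<subseteq> V" "\<And>i. Suc i < n \<Longrightarrow> adj (xs!i) (xs!Suc i)"
    using xsP unfolding P_def n_def by auto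
  have n1: "1 \<le> n" using xs(1) n_def by (cases xs) auto
  define u where "u = xs ! (n - 1)"
  have uV: "u \<in> V" using xs(3) n1 unfolding u_def n_def by (simp add: subsetD)
  obtain w where w: "adj u w" "w \<in> V" "2 \<le> n \<Longrightarrow> w \<noteq> xs ! (n - 2)"
    using deg[OF uV] by metis
  have "w \<in> set xs"
  proof (rule ccontr)
    assume nw: "w \<notin> set xs"
    have "xs @ [w] \<in> P"
      unfolding P_def
    proof (intro CollectI conjI allI impI)
      show "xs @ [w] \<noteq> []" by simp
      show "distinct (xs @ [w])" using xs(2) nw by simp
      show "set (xs @ [w]) \<subseteq> V" using xs(3) w(2) by simp
      fix i assume i: "Suc i < length (xs @ [w])"
      show "adj ((xs @ [w]) ! i) ((xs @ [w]) ! Suc i)"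
      proof (cases "Suc i < n")
        case True
        then show ?thesis using xs(4)[OF True] by (simp add: nth_append n_def)
      next
        case False
        then have "i = n - 1" using i n_def by simp
        then show ?thesis using w(1) n1 unfolding u_def by (simp add: nth_append n_def)
      qed
    qed
    then show False using maxl by fastforce
  qed
  then obtain j where j: "j < n" "xs ! j = w" by (metis in_set_conv_nth n_def)
  have "j \<noteq> n - 1" using j(2) irr w(1) u_def by blast
  moreover have "n \<ge> 2 \<Longrightarrow> j \<noteq> n - 2" using j(2) w(3) by blast
  ultimately have j2: "j + 3 \<le> n" using j(1) n1 by (cases "n \<ge> 2") auto
  define ys where "ys = drop j xs"
  have ly: "length ys = n - j" unfolding ys_def n_def by simp
  have "is_cycle adj ys"
    unfolding is_cycle_def
  proof (intro conjI allI impI)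
    show "3 \<le> length ys" using ly j2 by simp
    show "distinct ys" using xs(2) unfolding ys_def by simp
    fix i assume i: "i < length ys"
    show "adj (ys ! i) (ys ! ((i + 1) mod length ys))"
    proof (cases "i + 1 < length ys")
      case True
      then show ?thesis using xs(4)[of "j+i"] ly unfolding ys_def n_def by simp
    next
      case False
      then have "i = n - j - 1" using i ly by simp
      have "i + 1 = length ys" using i False by simp
      then have m0: "(i + 1) mod length ys = 0" by simp
      have "ys ! i = u" using \<open>i = n - j - 1\<close> ly j2 unfolding ys_def u_def n_def
        by auto
      note this m0
      moreover have "ys ! 0 = w" using j unfolding ys_def n_def by simp
      ultimately show ?thesis using w(1) by simp
    qed
  qed
  then show ?thesis unfolding has_cycle_def by blast
qed



lemma leaf_conn:
  assumes "adj\<^sup>*\<^sup>* x y" "x \<noteq> u" "\<And>z. adj u z \<Longrightarrow> z = w"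
    "\<And>a b. adj a b \<Longrightarrow> adj b a" "\<And>a. \<not> adj a a"
  shows "(y \<noteq> u \<longrightarrow> (\<lambda>a b. adj a b \<and> a \<noteq> u \<and> b \<noteq> u)\<^sup>*\<^sup>* x y) \<and>
         (y = u \<longrightarrow> (\<lambda>a b. adj a b \<and> a \<noteq> u \<and> b \<noteq> u)\<^sup>*\<^sup>* x w)"
  using assms(1)
proof (induction rule: rtranclp_induct)
  case base
  then show ?case using assms(2) by simp
next
  case (step y z)
  let ?a = "\<lambda>a b. adj a b \<and> a \<noteq> u \<and> b \<noteq> u"
  show ?case
  proof (cases "y = u")
    case True
    then have "z \<noteq> u" using step(2) assms(5) by blast
    moreover have "z = w" using True step(2) assms(3) by blast
    ultimately show ?thesis using step(3) True by simp
  next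
    case False
    show ?thesis
    proof (cases "z = u")
      case True
      then have "y = w" using step(2) assms(3,4) by blast
      then show ?thesis using step(3) False True by simp
    next
      case zu: False
      have "?a y z" using step(2) False zu by simp
      have "?a\<^sup>*\<^sup>* x y" using step(3) False by simp
      then have "?a\<^sup>*\<^sup>* x z" using \<open>?a y z\<close> by (rule rtranclp.rtrancl_into_rtrancl)
      then show ?thesis using zu by simp
    qed
  qed
qed

lemma has_cycle_mono:
  "has_cycle adj \<Longrightarrow> (\<And>x y. adj x y \<Longrightarrow> adj' x y) \<Longrightarrow> has_cycle adj'"
  unfolding has_cycle_def using is_cycle_mono by blast

lemma tree_count:
  assumes "finite V" "V \<noteq> {}" "\<And>x y. adj x y \<Longrightarrow> x \<in> V \<and> y \<in> V"
    "\<And>x y. adj x y \<Longrightarrow> adj y x" "\<And>x. \<not> adj x x"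
    "\<And>x y. x \<in> V \<Longrightarrow> y \<in> V \<Longrightarrow> adj\<^sup>*\<^sup>* x y" "\<not> has_cycle adj"
  shows "card {(x,y). adj x y} + 2 = 2 * card V"
  using assms
proof (induction "card V" arbitrary: V adj)
  case 0
  then show ?case by simp
next
  case (Suc k)
  note fin = Suc.prems(1) and ne = Suc.prems(2) and inV = Suc.prems(3) and sym = Suc.prems(4)
    and irr = Suc.prems(5) and conn = Suc.prems(6) and acyc = Suc.prems(7)
  have finE: "finite {(x,y). adj x y}"
    by (rule finite_subset[of _ "V \<times> V"]) (use inV fin in auto)
  show ?case
  proof (cases "k = 0")
    case True
    then have "card V = 1" using Suc.hyps(2) by simp
    then obtain x where V: "V = {x}" by (rule card_1_singletonE)
    have na: "\<not> adj a b" for a b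
    proof
      assume ab: "adj a b"
      then have "a = b" using inV[OF ab] V by simp
      then show False using ab irr by simp
    qed
    have e: "{(x,y). adj x y} = {}" using na by auto
    have "card {(x,y). adj x y} = 0" by (subst e) simp
    then show ?thesis using V by simp
  next
    case False
    have nb: "\<exists>y. adj x y" if xV: "x \<in> V" for x
    proof -
      have "card V \<ge> 2" using False Suc.hyps(2) by simp
      then obtain y where "y \<in> V" "y \<noteq> x"
        by (metis card_le_Suc0_iff_eq fin not_less_eq_eq numeral_2_eq_2)
      then have "adj\<^sup>*\<^sup>* x y" using conn xV by blast
      then show ?thesis using \<open>y \<noteq> x\<close> by (metis converse_rtranclpE)
    qed
    have "\<exists>u\<in>V. \<exists>w. adj u w \<and> (\<forall>z. adj u z \<longrightarrow> z = w)"
    proof (rule ccontr)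
      assume "\<not> ?thesis"
      then have nl: "\<And>x w. x \<in> V \<Longrightarrow> adj x w \<Longrightarrow> \<exists>z. adj x z \<and> z \<noteq> w" by metis
      have "\<exists>y z. y \<noteq> z \<and> adj x y \<and> adj x z \<and> y \<in> V \<and> z \<in> V" if xV: "x \<in> V" for x
      proof -
        obtain y where y: "adj x y" using nb[OF xV] by blast
        obtain z where z: "adj x z" "z \<noteq> y" using nl[OF xV y] by blast
        show ?thesis using y z inV by blast
      qed
      moreover obtain x0 where "x0 \<in> V" using ne by blast
      ultimately have "has_cycle adj" using mindeg2_cycle[OF fin, of x0 adj] irr by blast
      then show False using acyc by blast
    qed
    then obtain u w where u: "u \<in> V" "adj u w" "\<And>z. adj u z \<Longrightarrow> z = w" by blast
    have wu: "w \<noteq> u" using u(2) irr by blast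
    have wV: "w \<in> V" using u(2) inV by blast
    define V' where "V' = V - {u}"
    define adj' where "adj' = (\<lambda>a b. adj a b \<and> a \<noteq> u \<and> b \<noteq> u)"
    have cV: "card V = Suc (card V')" using u(1) fin unfolding V'_def
      by (metis card_Suc_Diff1)
    have IH: "card {(x,y). adj' x y} + 2 = 2 * card V'"
    proof (rule Suc.hyps(1))
      show "k = card V'" using cV Suc.hyps(2) by simp
      show "finite V'" using fin V'_def by simp
      show "V' \<noteq> {}" using wV wu V'_def by blast
      show "\<And>x y. adj' x y \<Longrightarrow> x \<in> V' \<and> y \<in> V'" using inV unfolding adj'_def V'_def by blast
      show "\<And>x y. adj' x y \<Longrightarrow> adj' y x" using sym unfolding adj'_def by blast
      show "\<And>x. \<not> adj' x x" using irr unfolding adj'_def by blast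
      show "\<not> has_cycle adj'" using acyc has_cycle_mono[of adj' adj] unfolding adj'_def by blast
      fix x y assume "x \<in> V'" "y \<in> V'"
      then have "adj\<^sup>*\<^sup>* x y" "x \<noteq> u" "y \<noteq> u" using conn unfolding V'_def by auto
      then show "adj'\<^sup>*\<^sup>* x y" using leaf_conn[of adj x y u w, OF _ _ u(3) sym irr] unfolding adj'_def
        by simp
    qed
    have eq: "{(x,y). adj x y} = insert (u,w) (insert (w,u) {(x,y). adj' x y})"
      using u(2,3) sym unfolding adj'_def by blast
    have fin': "finite {(x,y). adj' x y}"
      by (rule finite_subset[OF _ finE]) (auto simp: adj'_def)
    have "card {(x,y). adj x y} = card {(x,y). adj' x y} + 2"
      unfolding eq using fin' wu by (simp add: adj'_def)
    then show ?thesis using IH cV by simp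
  qed
qed



lemma gadj_sym: "gadj E S x y \<Longrightarrow> gadj E S y x"
  unfolding gadj_def by blast

lemma gadj_irr: "\<not> gadj E S x x"
  unfolding gadj_def by blast

lemma gadj_in: "gadj E S x y \<Longrightarrow> x \<in> gverts E S \<and> y \<in> gverts E S"
  unfolding gadj_def gverts_def Nbr_def by blast

lemma part1:
  fixes E :: "('v \<times> 'c) set"
  assumes tg: "tanner_graph L R E" and lr: "left_regular L E dl" and dl: "2 \<le> dl"
    and Sne: "S \<noteq> {}" and ts: "trapping_set L E S a b" and con: "induced_connected E S"
    and acyc: "\<not> has_cycle (gadj E S)"
  shows "b \<ge> a * (dl - 2) + 2 \<and> (elementary E S \<longrightarrow> b = a * (dl - 2) + 2)"
proof -
  have SL: "S \<subseteq> L" and ca: "card S = a" and cb: "card (odd_checks E S) = b"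
    using ts unfolding trapping_set_def by auto
  have finL: "finite L" "finite R" "E \<subseteq> L \<times> R" using tg unfolding tanner_graph_def by auto
  have finS: "finite S" using SL finL(1) finite_subset by blast
  have finE: "finite E" using finL finite_subset by blast
  have finN: "finite (Nbr E S)"
  proof (rule finite_subset[of _ "snd ` E"])
    show "Nbr E S \<subseteq> snd ` E" unfolding Nbr_def by force
  qed (use finE in simp)
  have finc: "finite {c. (v, c) \<in> E}" for v
    by (rule finite_subset[of _ "snd ` E"]) (force, use finE in simp)
  define F where "F = {(v,c). (v,c) \<in> E \<and> v \<in> S}"
  have F1: "F = Sigma S (\<lambda>v. {c. (v, c) \<in> E})" unfolding F_def by auto
  have cF1: "card F = a * dl"
  proof -
    have "card F = (\<Sum>v\<in>S. card {c. (v, c) \<in> E})" unfolding F1 using finS finc by simp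
    also have "\<dots> = (\<Sum>v\<in>S. dl)"
      using lr SL unfolding left_regular_def vdeg_def by (intro sum.cong) auto
    finally show ?thesis using ca by simp
  qed
  have F2: "F = (\<lambda>(c,v). (v,c)) ` Sigma (Nbr E S) (\<lambda>c. {v\<in>S. (v, c) \<in> E})"
    unfolding F_def Nbr_def by force
  have cF2: "card F = (\<Sum>c\<in>Nbr E S. degS E S c)"
  proof -
    have "card F = card (Sigma (Nbr E S) (\<lambda>c. {v\<in>S. (v, c) \<in> E}))"
      unfolding F2 by (rule card_image) (auto simp: inj_on_def)
    also have "\<dots> = (\<Sum>c\<in>Nbr E S. degS E S c)"
      using finN finS unfolding degS_def by simp
    finally show ?thesis .
  qed
  define f1 :: "'v \<times> 'c \<Rightarrow> ('v + 'c) \<times> ('v + 'c)" where "f1 = (\<lambda>(v,c). (Inl v, Inr c))"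
  define f2 :: "'v \<times> 'c \<Rightarrow> ('v + 'c) \<times> ('v + 'c)" where "f2 = (\<lambda>(v,c). (Inr c, Inl v))"
  have ed: "{(x,y). gadj E S x y} = f1 ` F \<union> f2 ` F"
    unfolding F_def gadj_def f1_def f2_def by fastforce
  have finF: "finite F" unfolding F1 using finS finc by simp
  have cE: "card {(x,y). gadj E S x y} = 2 * card F"
  proof -
    have "card (f1 ` F \<union> f2 ` F)
        = card (f1 ` F) + card (f2 ` F)"
      by (rule card_Un_disjoint) (use finF in \<open>auto simp: f1_def f2_def\<close>)
    also have "\<dots> = card F + card F"
      by (subst card_image, force simp: inj_on_def f1_def f2_def, subst card_image, force simp: inj_on_def f1_def f2_def, simp)
    finally show ?thesis unfolding ed by simp
  qed
  have cV: "card (gverts E S) = a + card (Nbr E S)"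
  proof -
    have "card (gverts E S) = card (Inl ` S :: ('v + 'c) set) + card (Inr ` Nbr E S :: ('v + 'c) set)"
      unfolding gverts_def by (rule card_Un_disjoint) (use finS finN in auto)
    also have "\<dots> = a + card (Nbr E S)"
      using ca by (simp add: card_image)
    finally show ?thesis .
  qed
  have tc: "card {(x,y). gadj E S x y} + 2 = 2 * card (gverts E S)"
  proof (rule tree_count)
    show "finite (gverts E S)" unfolding gverts_def using finS finN by simp
    show "gverts E S \<noteq> {}" using con unfolding induced_connected_def by simp
    show "\<And>x y. x \<in> gverts E S \<Longrightarrow> y \<in> gverts E S \<Longrightarrow> (gadj E S)\<^sup>*\<^sup>* x y"
      using con unfolding induced_connected_def by simp
    show "\<And>x. \<not> gadj E S x x" by (rule gadj_irr)
  qed (use gadj_in gadj_sym acyc in auto)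
  define N where "N = card (Nbr E S)"
  have key: "a + N = a * dl + 1" using tc cE cV cF1 N_def by simp
  define Od where "Od = odd_checks E S"
  define Ev where "Ev = even_checks E S"
  have part: "Nbr E S = Od \<union> Ev" "Od \<inter> Ev = {}"
    unfolding Od_def Ev_def odd_checks_def even_checks_def by auto
  have finO: "finite Od" "finite Ev" using part finN by (metis finite_Un)+
  have cN: "N = b + card Ev" using part finO cb Od_def N_def by (simp add: card_Un_disjoint)
  have pos: "degS E S c \<ge> 1" if "c \<in> Nbr E S" for c
  proof -
    have "{v\<in>S. (v, c) \<in> E} \<noteq> {}" using that unfolding Nbr_def by blast
    then show ?thesis unfolding degS_def using finS
      by (metis (no_types, lifting) One_nat_def Suc_leI card_gt_0_iff finite_subset mem_Collect_eq subsetI)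
  qed
  have sumsplit: "(\<Sum>c\<in>Nbr E S. degS E S c) = (\<Sum>c\<in>Od. degS E S c) + (\<Sum>c\<in>Ev. degS E S c)"
    unfolding part(1) by (rule sum.union_disjoint) (use finO part(2) in auto)
  have sO: "(\<Sum>c\<in>Od. degS E S c) \<ge> b"
  proof -
    have "(\<Sum>c\<in>Od. degS E S c) \<ge> (\<Sum>c\<in>Od. 1)"
      by (rule sum_mono) (use pos part(1) in blast)
    then show ?thesis using cb Od_def by simp
  qed
  have degE: "degS E S c \<ge> 2" if "c \<in> Ev" for c
  proof -
    have "c \<in> Nbr E S" "even (degS E S c)" using that unfolding Ev_def even_checks_def by auto
    then show ?thesis using pos[of c] by presburger
  qed
  have sE: "(\<Sum>c\<in>Ev. degS E S c) \<ge> 2 * card Ev"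
  proof -
    have "(\<Sum>c\<in>Ev. degS E S c) \<ge> (\<Sum>c\<in>Ev. 2)"
      by (rule sum_mono) (use degE in blast)
    then show ?thesis by simp
  qed
  have m2a: "a * dl \<ge> 2 * a" using dl by simp
  have ad: "a * (dl - 2) = a * dl - 2 * a" by (simp add: diff_mult_distrib2)
  have ge: "b \<ge> a * (dl - 2) + 2"
    using cF1 cF2 sumsplit sO sE key cN m2a ad by linarith
  moreover have "b = a * (dl - 2) + 2" if el: "elementary E S"
  proof -
    have "(\<Sum>c\<in>Od. degS E S c) = (\<Sum>c\<in>Od. 1)"
    proof (rule sum.cong)
      fix c assume "c \<in> Od"
      then have "c \<in> Nbr E S" "odd (degS E S c)" unfolding Od_def odd_checks_def by auto
      then show "degS E S c = 1" using el unfolding elementary_def by fastforce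
    qed simp
    then have eO: "(\<Sum>c\<in>Od. degS E S c) = b" using cb Od_def by simp
    have "(\<Sum>c\<in>Ev. degS E S c) = (\<Sum>c\<in>Ev. 2)"
    proof (rule sum.cong)
      fix c assume "c \<in> Ev"
      then have "c \<in> Nbr E S" "even (degS E S c)" unfolding Ev_def even_checks_def by auto
      then show "degS E S c = 2" using el unfolding elementary_def by fastforce
    qed simp
    then have eE: "(\<Sum>c\<in>Ev. degS E S c) = 2 * card Ev" by simp
    show ?thesis using cF1 cF2 sumsplit eO eE key cN m2a ad by linarith
  qed
  ultimately show ?thesis by blast
qed



lemma elem_minus:
  assumes "Suc k \<le> card A" shows "\<exists>x. x \<in> A \<and> k \<le> card (A - {x})"
proof -
  have "finite A" "A \<noteq> {}" using assms card_gt_0_iff by fastforce+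
  then obtain x where "x \<in> A" by blast
  moreover have "card (A - {x}) = card A - 1" using \<open>x \<in> A\<close> \<open>finite A\<close> by simp
  ultimately show ?thesis using assms by auto
qed

lemma two_elems:
  assumes "2 \<le> card A" shows "\<exists>x y. x \<in> A \<and> y \<in> A \<and> x \<noteq> y"
proof -
  obtain x where x: "x \<in> A" "Suc 0 \<le> card (A - {x})" using elem_minus[of 1 A] assms by auto
  obtain y where y: "y \<in> A - {x}" using elem_minus[OF x(2)] by blast
  show ?thesis using x y by blast
qed

lemma three_elems:
  assumes "3 \<le> card A" shows "\<exists>x y z. x \<in> A \<and> y \<in> A \<and> z \<in> A \<and> x \<noteq> y \<and> x \<noteq> z \<and> y \<noteq> z"
proof -
  obtain x where x: "x \<in> A" "Suc (Suc 0) \<le> card (A - {x})" using elem_minus[of 2 A] assms by auto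
  obtain y where y: "y \<in> A - {x}" "Suc 0 \<le> card (A - {x} - {y})" using elem_minus[OF x(2)] by blast
  obtain z where z: "z \<in> A - {x} - {y}" using elem_minus[OF y(2)] by blast
  show ?thesis using x y z by blast
qed

lemma core_cycle:
  fixes E :: "('v \<times> 'c) set"
  assumes finS: "finite S" and finE: "finite E" and Sne: "S \<noteq> {}"
    and deg: "\<And>v. v \<in> S \<Longrightarrow> 2 \<le> card {c\<in>even_checks E S. (v, c) \<in> E}"
  shows "has_cycle (gadj E S)"
proof -
  define H where "H = (\<lambda>x y. gadj E S x y \<and> (\<forall>c. x = Inr c \<or> y = Inr c \<longrightarrow> c \<in> even_checks E S))"
  define V :: "('v + 'c) set" where "V = Inl ` S \<union> Inr ` even_checks E S"
  have finN: "finite (even_checks E S)"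
    by (rule finite_subset[of _ "snd ` E"]) (force simp: even_checks_def Nbr_def, simp add: finE)
  obtain v0 where v0: "v0 \<in> S" using Sne by blast
  have "has_cycle H"
  proof (rule mindeg2_cycle[of V "Inl v0"])
    show "finite V" unfolding V_def using finS finN by simp
    show "Inl v0 \<in> V" unfolding V_def using v0 by simp
    show "\<And>x. \<not> H x x" unfolding H_def using gadj_irr by blast
    fix x assume "x \<in> V"
    then consider v where "v \<in> S" "x = Inl v" | c where "c \<in> even_checks E S" "x = Inr c"
      unfolding V_def by blast
    then show "\<exists>y z. y \<noteq> z \<and> H x y \<and> H x z \<and> y \<in> V \<and> z \<in> V"
    proof cases
      case 1
      obtain c1 c2 where c: "c1 \<in> {c\<in>even_checks E S. (v, c) \<in> E}"
          "c2 \<in> {c\<in>even_checks E S. (v, c) \<in> E}" "c1 \<noteq> c2"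
        using two_elems[OF deg[OF 1(1)]] by blast
      have "H x (Inr c1)" "H x (Inr c2)" using c 1 unfolding H_def gadj_def by auto
      moreover have "Inr c1 \<in> V" "Inr c2 \<in> V" using c unfolding V_def by auto
      ultimately show ?thesis using c(3) by blast
    next
      case 2
      have cN: "c \<in> Nbr E S" "even (degS E S c)" using 2(1) unfolding even_checks_def by auto
      have ne: "{v\<in>S. (v, c) \<in> E} \<noteq> {}" using cN(1) unfolding Nbr_def by blast
      have "card {v\<in>S. (v, c) \<in> E} \<noteq> 0" using ne finS by simp
      then have "2 \<le> degS E S c" using cN(2) unfolding degS_def by presburger
      then obtain v1 v2 where v: "v1 \<in> {v\<in>S. (v, c) \<in> E}" "v2 \<in> {v\<in>S. (v, c) \<in> E}" "v1 \<noteq> v2"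
        using two_elems unfolding degS_def by blast
      have "H x (Inl v1)" "H x (Inl v2)" using v 2 unfolding H_def gadj_def by auto
      moreover have "Inl v1 \<in> V" "Inl v2 \<in> V" using v unfolding V_def by auto
      ultimately show ?thesis using v(3) by blast
    qed
  qed
  then show ?thesis using has_cycle_mono[of H "gadj E S"] unfolding H_def by blast
qed



lemma sucmod: "(p::nat) < n \<Longrightarrow> (p + 1) mod n = (if p + 1 = n then 0 else p + 1)"
  by auto

lemma three_pos_sorted:
  assumes "a < b" "b < c" "c < (n::nat)"
  shows "\<exists>p q d. p \<in> {a,b,c} \<and> q \<in> {a,b,c} \<and> 1 \<le> d \<and> 3 * d \<le> n \<and> (p + d) mod n = q"
proof (cases "3 * (b - a) \<le> n")
  case True
  then show ?thesis using assms
    by (intro exI[of _ a] exI[of _ b] exI[of _ "b - a"]) auto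
next
  case F1: False
  show ?thesis
  proof (cases "3 * (c - b) \<le> n")
    case True
    then show ?thesis using assms
      by (intro exI[of _ b] exI[of _ c] exI[of _ "c - b"]) auto
  next
    case False
    have e: "c + (n - c + a) = n + a" using assms by simp
    have m: "(c + (n - c + a)) mod n = a" unfolding e using assms by simp
    define x y z where "x = b - a" and "y = c - b" and "z = n - c + a"
    have sum: "x + y + z = n" using assms unfolding x_def y_def z_def by simp
    have "3 * z \<le> n" using F1 False sum unfolding x_def[symmetric] y_def[symmetric] by linarith
    then have "3 * (n - c + a) \<le> n" unfolding z_def .
    then show ?thesis using assms m
      by (intro exI[of _ c] exI[of _ a] exI[of _ "n - c + a"]) auto
  qed
qed

lemma three_pos:
  assumes "p1 < n" "p2 < n" "p3 < (n::nat)" "p1 \<noteq> p2" "p1 \<noteq> p3" "p2 \<noteq> p3"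
  shows "\<exists>p q d. p \<in> {p1,p2,p3} \<and> q \<in> {p1,p2,p3} \<and> 1 \<le> d \<and> 3 * d \<le> n \<and> (p + d) mod n = q"
proof -
  have "\<exists>a b c. a < b \<and> b < c \<and> {a,b,c} = {p1,p2,p3}"
  proof (cases "p1 < p2")
    case True
    show ?thesis
    proof (cases "p2 < p3")
      case True
      then show ?thesis using \<open>p1 < p2\<close> by blast
    next
      case False
      then have "p3 < p2" using assms by simp
      show ?thesis
      proof (cases "p1 < p3")
        case True
        then show ?thesis using \<open>p3 < p2\<close> by blast
      next
        case False
        then have "p3 < p1" using assms by simp
        then show ?thesis using \<open>p1 < p2\<close> by blast
      qed
    qed
  next
    case False
    then have "p2 < p1" using assms by simp
    show ?thesis
    proof (cases "p1 < p3")
      case True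
      then show ?thesis using \<open>p2 < p1\<close> by blast
    next
      case False
      then have "p3 < p1" using assms by simp
      show ?thesis
      proof (cases "p2 < p3")
        case True
        then show ?thesis using \<open>p3 < p1\<close> by blast
      next
        case False
        then have "p3 < p2" using assms by simp
        then show ?thesis using \<open>p2 < p1\<close> by blast
      qed
    qed
  qed
  then obtain a b c where abc: "a < b" "b < c" "{a,b,c} = {p1,p2,p3}" by blast
  have "c \<in> {p1,p2,p3}" using abc(3) by blast
  then have "c < n" using assms by auto
  then show ?thesis using three_pos_sorted[OF abc(1,2)] abc(3) by simp
qed

lemma chord_pos:
  assumes "k < n" "p < (n::nat)" "p \<noteq> k" "p \<noteq> (k + 1) mod n" "k \<noteq> (p + 1) mod n"
  shows "\<exists>e. 2 \<le> e \<and> e + 2 \<le> n \<and> (k + e) mod n = p"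
proof (cases "k < p")
  case True
  have h1: "p \<noteq> k + 1" using assms(4) sucmod[OF assms(1)] True assms(2) by (auto split: if_splits)
  have h2: "k = 0 \<Longrightarrow> p + 1 \<noteq> n" using assms(5) sucmod[OF assms(2)] by auto
  have "(k + (p - k)) mod n = p" using True assms by simp
  moreover have "2 \<le> p - k" using True h1 by simp
  moreover have "p - k + 2 \<le> n" using True h2 assms by (cases "k = 0") auto
  ultimately show ?thesis by blast
next
  case False
  then have pk: "p < k" using assms(3) by simp
  have h1: "k + 1 = n \<Longrightarrow> p \<noteq> 0" using assms(4) sucmod[OF assms(1)] by auto
  have h2: "k \<noteq> p + 1" using assms(5) sucmod[OF assms(2)] pk assms(1) by (auto split: if_splits)
  have e: "k + (n + p - k) = n + p" using pk assms(1) by arith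
  have "(k + (n + p - k)) mod n = p" unfolding e using assms by simp
  moreover have "2 \<le> n + p - k" using h1 pk assms(1) by (cases "k + 1 = n") auto
  moreover have "n + p - k + 2 \<le> n" using h2 pk assms(1) by presburger
  ultimately show ?thesis by blast
qed

lemma pick_pos:
  assumes "p1 < n" "p2 < n" "p3 < (n::nat)" "p1 \<noteq> p2" "p1 \<noteq> p3" "p2 \<noteq> p3"
  shows "\<exists>p\<in>{p1,p2,p3}. p \<noteq> (k + 1) mod n \<and> k \<noteq> (p + 1) mod n"
proof (rule ccontr)
  assume "\<not> ?thesis"
  then have a: "\<And>p. p \<in> {p1,p2,p3} \<Longrightarrow> p = (k + 1) mod n \<or> k = (p + 1) mod n" by blast
  have inj: "\<And>p q. p < n \<Longrightarrow> q < n \<Longrightarrow> k = (p + 1) mod n \<Longrightarrow> k = (q + 1) mod n \<Longrightarrow> p = q"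
    using sucmod by (auto split: if_splits)
  have "p1 = (k + 1) mod n \<or> k = (p1 + 1) mod n" "p2 = (k + 1) mod n \<or> k = (p2 + 1) mod n"
    "p3 = (k + 1) mod n \<or> k = (p3 + 1) mod n" using a by auto
  then show False using inj[of p1 p2] inj[of p1 p3] inj[of p2 p3] assms by auto
qed

lemma gadj_isl: "gadj E S x y \<Longrightarrow> isl x \<noteq> isl y"
  unfolding gadj_def by auto

lemma no_tri:
  assumes "is_cycle (gadj E S) xs" shows "length xs \<noteq> 3"
proof
  assume l: "length xs = 3"
  have c: "\<forall>i<3. gadj E S (xs ! i) (xs ! ((i + 1) mod 3))" using assms l unfolding is_cycle_def by simp
  have "gadj E S (xs!0) (xs!1)" using c[rule_format, of 0] by simp
  moreover have "gadj E S (xs!1) (xs!2)" using c[rule_format, of 1] by (simp add: numeral_2_eq_2)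
  moreover have "gadj E S (xs!2) (xs!0)" using c[rule_format, of 2] by (simp add: numeral_2_eq_2)
  ultimately have "isl (xs!0) \<noteq> isl (xs!1)" "isl (xs!1) \<noteq> isl (xs!2)" "isl (xs!2) \<noteq> isl (xs!0)"
    using gadj_isl by blast+
  then show False by (cases "isl (xs!0)"; cases "isl (xs!1)") auto
qed



lemma part2:
  fixes E :: "('v \<times> 'c) set"
  assumes tg: "tanner_graph L R E" and cyc: "is_cycle (gadj E L) xs"
    and minc: "\<forall>ys. is_cycle (gadj E L) ys \<longrightarrow> length xs \<le> length ys"
  shows "{v. Inl v \<in> set xs} \<subseteq> L \<and> elementary E {v. Inl v \<in> set xs}"
proof -
  define S where "S = {v. Inl v \<in> set xs}"
  define n where "n = length xs"
  have n3: "3 \<le> n" and a: "\<And>i. i < n \<Longrightarrow> gadj E L (xs ! i) (xs ! ((i + 1) mod n))"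
    using cyc unfolding is_cycle_def n_def by auto
  have n4: "4 \<le> n" using n3 no_tri[OF cyc] n_def by simp
  have finL: "finite L" using tg unfolding tanner_graph_def by simp
  have SL: "S \<subseteq> L"
  proof
    fix v assume "v \<in> S"
    then obtain i where i: "i < n" "xs ! i = Inl v" unfolding S_def n_def by (metis in_set_conv_nth mem_Collect_eq)
    show "v \<in> L" using a[OF i(1)] i(2) unfolding gadj_def by auto
  qed
  have finS: "finite S" using SL finL finite_subset by blast
  have "elementary E S"
    unfolding elementary_def
  proof
    fix c assume cN: "c \<in> Nbr E S"
    define A where "A = {v\<in>S. (v, c) \<in> E}"
    have "A \<noteq> {}" using cN unfolding Nbr_def A_def by blast
    moreover have "finite A" using finS unfolding A_def by simp
    ultimately have pos: "1 \<le> card A" by (simp add: Suc_leI card_gt_0_iff)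
    have "\<not> 3 \<le> card A"
    proof
      assume "3 \<le> card A"
      then obtain v1 v2 v3 where v: "v1 \<in> A" "v2 \<in> A" "v3 \<in> A" "v1 \<noteq> v2" "v1 \<noteq> v3" "v2 \<noteq> v3"
        using three_elems by blast
      have vA: "\<And>v. v \<in> A \<Longrightarrow> \<exists>p<n. xs ! p = Inl v" unfolding A_def S_def n_def
        by (auto simp: in_set_conv_nth)
      obtain p1 where p1: "p1 < n" "xs ! p1 = Inl v1" using vA[OF v(1)] by blast
      obtain p2 where p2: "p2 < n" "xs ! p2 = Inl v2" using vA[OF v(2)] by blast
      obtain p3 where p3: "p3 < n" "xs ! p3 = Inl v3" using vA[OF v(3)] by blast
      have pd: "p1 \<noteq> p2" "p1 \<noteq> p3" "p2 \<noteq> p3" using p1 p2 p3 v by auto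
      have adjc: "gadj E L (xs ! p) (Inr c) \<and> gadj E L (Inr c) (xs ! p)" if pP: "p \<in> {p1,p2,p3}" for p
      proof -
        obtain v where "v \<in> A" "xs ! p = Inl v" using pP p1 p2 p3 v by auto
        then have "v \<in> L" "(v, c) \<in> E" using SL unfolding A_def by auto
        then show ?thesis using \<open>xs ! p = Inl v\<close> unfolding gadj_def by auto
      qed
      have pn: "p < n" if "p \<in> {p1,p2,p3}" for p using that p1 p2 p3 by auto
      have ne0: "n \<noteq> 0" using n3 by simp
      show False
      proof (cases "Inr c \<in> set xs")
        case False
        obtain p q d where pq: "p \<in> {p1,p2,p3}" "q \<in> {p1,p2,p3}" "1 \<le> d" "3 * d \<le> n"
            "(p + d) mod n = q"
          using three_pos[OF p1(1) p2(1) p3(1) pd] by blast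
        define ys where "ys = rotate p xs"
        have cy: "is_cycle (gadj E L) ys" unfolding ys_def by (rule is_cycle_rotate[OF cyc])
        have ly: "length ys = n" unfolding ys_def n_def by simp
        have dn: "d < n" using pq(3,4) by simp
        have "ys ! 0 = xs ! ((p + 0) mod n)" unfolding ys_def n_def
          by (rule nth_rotate) (use n3 n_def in auto)
        then have y0: "ys ! 0 = xs ! p" using pn[OF pq(1)] by simp
        have "ys ! d = xs ! ((p + d) mod n)" unfolding ys_def n_def
          by (rule nth_rotate) (use dn n_def in simp)
        then have yd: "ys ! d = xs ! q" using pq(5) by simp
        have "is_cycle (gadj E L) (take (d+1) ys @ [Inr c])"
        proof (rule is_cycle_detour[OF cy pq(3)])
          show "d < length ys" using dn ly by simp
          show "Inr c \<notin> set ys" using False unfolding ys_def by simp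
          show "gadj E L (ys ! d) (Inr c)" using yd adjc[OF pq(2)] by simp
          show "gadj E L (Inr c) (ys ! 0)" using y0 adjc[OF pq(1)] by simp
        qed
        then have "n \<le> length (take (d+1) ys @ [Inr c])" using minc n_def by blast
        moreover have "length (take (d+1) ys @ [Inr c]) = d + 2" using dn ly by simp
        ultimately show False using pq(4) n4 by linarith
      next
        case True
        then obtain k where k: "k < n" "xs ! k = Inr c" unfolding n_def by (metis in_set_conv_nth)
        obtain p where p: "p \<in> {p1,p2,p3}" "p \<noteq> (k + 1) mod n" "k \<noteq> (p + 1) mod n"
          using pick_pos[OF p1(1) p2(1) p3(1) pd] by blast
        have "p \<noteq> k" using p(1) p1 p2 p3 k by auto
        then obtain e where e: "2 \<le> e" "e + 2 \<le> n" "(k + e) mod n = p"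
          using chord_pos[OF k(1) pn[OF p(1)] _ p(2,3)] by blast
        define ys where "ys = rotate k xs"
        have cy: "is_cycle (gadj E L) ys" unfolding ys_def by (rule is_cycle_rotate[OF cyc])
        have ly: "length ys = n" unfolding ys_def n_def by simp
        have "ys ! 0 = xs ! ((k + 0) mod n)" unfolding ys_def n_def
          by (rule nth_rotate) (use n3 n_def in auto)
        then have y0: "ys ! 0 = Inr c" using k by simp
        have "ys ! e = xs ! ((k + e) mod n)" unfolding ys_def n_def
          by (rule nth_rotate) (use e n_def in simp)
        then have ye: "ys ! e = xs ! p" using e(3) by simp
        have "is_cycle (gadj E L) (take (e+1) ys)"
        proof (rule is_cycle_chord[OF cy e(1)])
          show "e < length ys" using e ly by simp
          show "gadj E L (ys ! e) (ys ! 0)" using ye y0 adjc[OF p(1)] by simp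
        qed
        then have "n \<le> length (take (e+1) ys)" using minc n_def by blast
        moreover have "length (take (e+1) ys) = e + 1" using e ly by simp
        ultimately show False using e(2) by linarith
      qed
    qed
    then show "degS E S c = 1 \<or> degS E S c = 2" using pos unfolding degS_def A_def by linarith
  qed
  then show ?thesis using SL unfolding S_def by simp
qed



lemma split_deg:
  fixes E :: "('v \<times> 'c) set"
  assumes "v \<in> S" "finite E"
  shows "vdeg E v = card {c\<in>odd_checks E S. (v, c) \<in> E} + card {c\<in>even_checks E S. (v, c) \<in> E}"
proof -
  have fin: "finite {c. (v, c) \<in> E}"
    by (rule finite_subset[of _ "snd ` E"]) (force, simp add: assms(2))
  have eq: "{c. (v, c) \<in> E} = {c\<in>odd_checks E S. (v, c) \<in> E} \<union> {c\<in>even_checks E S. (v, c) \<in> E}"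
    using assms(1) unfolding odd_checks_def even_checks_def Nbr_def by auto
  have f1: "finite {c\<in>odd_checks E S. (v, c) \<in> E}" by (rule finite_subset[OF _ fin]) blast
  have f2: "finite {c\<in>even_checks E S. (v, c) \<in> E}" by (rule finite_subset[OF _ fin]) blast
  have dj: "{c\<in>odd_checks E S. (v, c) \<in> E} \<inter> {c\<in>even_checks E S. (v, c) \<in> E} = {}"
    unfolding odd_checks_def even_checks_def by blast
  show ?thesis unfolding vdeg_def eq by (rule card_Un_disjoint[OF f1 f2 dj])
qed

theorem lemma6:
  fixes L :: "'v set" and R :: "'c set" and E :: "('v \<times> 'c) set"
  assumes "tanner_graph L R E" and "min_degree_2 L R E"
  shows
    "(\<forall>dl S a b. left_regular L E dl \<and> 2 \<le> dl \<and> S \<noteq> {} \<and> trapping_set L E S a b \<and>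
        induced_connected E S \<and> \<not> has_cycle (gadj E S) \<longrightarrow>
        b \<ge> a * (dl - 2) + 2 \<and> (elementary E S \<longrightarrow> b = a * (dl - 2) + 2))
   \<and> (\<forall>xs. is_cycle (gadj E L) xs \<and> (\<forall>ys. is_cycle (gadj E L) ys \<longrightarrow> length xs \<le> length ys) \<longrightarrow>
        (let S = {v. Inl v \<in> set xs} in S \<subseteq> L \<and> elementary E S))
   \<and> (\<forall>S\<in>class_T L E. has_cycle (gadj E S))
   \<and> (\<forall>l S. left_regular L E l \<and> 2 \<le> l \<and> S \<subseteq> L \<and> S \<noteq> {} \<and> absorbing_set E S \<longrightarrow>
        has_cycle (gadj E S))
   \<and> (\<forall>l S. left_regular L E l \<and> 3 \<le> l \<and> S \<subseteq> L \<and> S \<noteq> {} \<and> ZP_trapping_set E l S \<longrightarrow>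
        has_cycle (gadj E S))"
proof -
  note tg = assms(1)
  have finL: "finite L" "finite R" "E \<subseteq> L \<times> R" using tg unfolding tanner_graph_def by auto
  have finE: "finite E" using finL finite_subset by blast
  have finS: "\<And>S. S \<subseteq> L \<Longrightarrow> finite S" using finL(1) finite_subset by blast
  have P1: "\<forall>dl S a b. left_regular L E dl \<and> 2 \<le> dl \<and> S \<noteq> {} \<and> trapping_set L E S a b \<and>
        induced_connected E S \<and> \<not> has_cycle (gadj E S) \<longrightarrow>
        b \<ge> a * (dl - 2) + 2 \<and> (elementary E S \<longrightarrow> b = a * (dl - 2) + 2)"
    using part1[OF tg] by blast
  have P2: "\<forall>xs. is_cycle (gadj E L) xs \<and> (\<forall>ys. is_cycle (gadj E L) ys \<longrightarrow> length xs \<le> length ys) \<longrightarrow>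
        (let S = {v. Inl v \<in> set xs} in S \<subseteq> L \<and> elementary E S)"
    using part2[OF tg] by (simp add: Let_def)
  have P3: "\<forall>S\<in>class_T L E. has_cycle (gadj E S)"
  proof
    fix S assume "S \<in> class_T L E"
    then have S: "S \<subseteq> L" "induced_connected E S"
      "\<And>v. v \<in> S \<Longrightarrow> 2 \<le> card {c\<in>even_checks E S. (v, c) \<in> E}"
      unfolding class_T_def by auto
    have "S \<noteq> {}" using S(2) unfolding induced_connected_def gverts_def Nbr_def by auto
    then show "has_cycle (gadj E S)" using core_cycle[OF finS[OF S(1)] finE] S(3) by blast
  qed
  have P4: "\<forall>l S. left_regular L E l \<and> 2 \<le> l \<and> S \<subseteq> L \<and> S \<noteq> {} \<and> absorbing_set E S \<longrightarrow>
        has_cycle (gadj E S)"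
  proof (intro allI impI)
    fix l S assume h: "left_regular L E l \<and> 2 \<le> l \<and> S \<subseteq> L \<and> S \<noteq> {} \<and> absorbing_set E S"
    have "2 \<le> card {c\<in>even_checks E S. (v, c) \<in> E}" if v: "v \<in> S" for v
    proof -
      have "vdeg E v = l" using h v unfolding left_regular_def by auto
      moreover note split_deg[OF v finE]
      moreover have "card {c\<in>odd_checks E S. (v, c) \<in> E} < card {c\<in>even_checks E S. (v, c) \<in> E}"
        using h v unfolding absorbing_set_def by blast
      ultimately show ?thesis using h by linarith
    qed
    then show "has_cycle (gadj E S)" using core_cycle[OF finS finE] h by blast
  qed
  have P5: "\<forall>l S. left_regular L E l \<and> 3 \<le> l \<and> S \<subseteq> L \<and> S \<noteq> {} \<and> ZP_trapping_set E l S \<longrightarrow>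
        has_cycle (gadj E S)"
  proof (intro allI impI)
    fix l S assume h: "left_regular L E l \<and> 3 \<le> l \<and> S \<subseteq> L \<and> S \<noteq> {} \<and> ZP_trapping_set E l S"
    have "2 \<le> card {c\<in>even_checks E S. (v, c) \<in> E}" if v: "v \<in> S" for v
    proof -
      have "vdeg E v = l" using h v unfolding left_regular_def by auto
      moreover note split_deg[OF v finE]
      moreover have "card {c\<in>odd_checks E S. (v, c) \<in> E} < l - (l - 1) div 2"
        using h v unfolding ZP_trapping_set_def by blast
      moreover have "3 \<le> l" using h by blast
      ultimately show ?thesis by presburger
    qed
    then show "has_cycle (gadj E S)" using core_cycle[OF finS finE] h by blast
  qed
  show ?thesis using P1 P2 P3 P4 P5 by blast
qed

end
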